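(* Let $\beta\ge0$, $\gamma>0$, $\lambda>0$ with $\beta\gamma<1$, and let $d\ge1$ be an integer. For any vector $\mathbf{x} \in \mathbb{R}_{\geq 0}^d$ there exists $\overline{x} \geq 0$ such that $$\sum_{i=1}^d h(x_i) \leq d \cdot h(\overline{x}) \quad \text{and} \quad F_d(\mathbf{x}) = F_d(\overline{x},\ldots,\overline{x}),$$ where $h(x) = \frac{(1-\beta\gamma)x}{(\beta x+1)(x+\gamma)}$ and $F_d(\mathbf x)=\lambda\prod_{i=1}^d\frac{\beta x_i+1}{x_i+\gamma}$. *)

theory Defs
  imports Complex_Main
begin

definition h_fun :: "real \<Rightarrow> real \<Rightarrow> real \<Rightarrow> real" where
  "h_fun \<beta> \<gamma> x = (1 - \<beta> * \<gamma>) * x / ((\<beta> * x + 1) * (x + \<gamma>))"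

definition F_fun :: "real \<Rightarrow> real \<Rightarrow> real \<Rightarrow> nat \<Rightarrow> (nat \<Rightarrow> real) \<Rightarrow> real" where
  "F_fun \<beta> \<gamma> lam d x = lam * (\<Prod>i=1..d. (\<beta> * x i + 1) / (x i + \<gamma>))"

end

theory Submission
  imports Defs
begin

lemma amgm_exp:
  fixes t :: "nat \<Rightarrow> real"
  assumes "finite A" "A \<noteq> {}"
  shows "real (card A) * exp ((\<Sum>i\<in>A. t i) / real (card A)) \<le> (\<Sum>i\<in>A. exp (t i))"
proof -
  define m where "m = (\<Sum>i\<in>A. t i) / real (card A)"
  have c: "real (card A) > 0" using assms by auto
  have "\<And>i. exp m * (1 + (t i - m)) \<le> exp (t i)"
  proof -
    fix i
    have "exp (t i) = exp m * exp (t i - m)" by (simp add: exp_add[symmetric])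
    moreover have "1 + (t i - m) \<le> exp (t i - m)" by (rule exp_ge_add_one_self)
    ultimately show "exp m * (1 + (t i - m)) \<le> exp (t i)" by simp
  qed
  hence "(\<Sum>i\<in>A. exp m * (1 + (t i - m))) \<le> (\<Sum>i\<in>A. exp (t i))" by (rule sum_mono)
  moreover have "(\<Sum>i\<in>A. exp m * (1 + (t i - m))) = exp m * (real (card A) + (\<Sum>i\<in>A. t i) - real (card A) * m)"
    by (simp add: sum_distrib_left[symmetric] sum.distrib sum_subtractf)
  moreover have "real (card A) * m = (\<Sum>i\<in>A. t i)" using c unfolding m_def by simp
  ultimately show ?thesis unfolding m_def by (simp add: mult.commute)
qed

lemma hg_lemma:
  fixes \<beta> \<gamma> z :: real
  assumes a: "\<beta> * z + 1 \<noteq> 0" "z + \<gamma> \<noteq> 0" "1 - \<beta>*\<gamma> \<noteq> 0"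
  shows "(1 - \<beta> * \<gamma>) * z / ((\<beta> * z + 1) * (z + \<gamma>)) = (1 + \<beta>*\<gamma> - \<gamma> * ((\<beta> * z + 1) / (z + \<gamma>)) - \<beta> / ((\<beta> * z + 1) / (z + \<gamma>))) / (1 - \<beta>*\<gamma>)"
proof -
  have e: "(1 + \<beta>*\<gamma> - \<gamma> * ((\<beta> * z + 1) / (z + \<gamma>)) - \<beta> / ((\<beta> * z + 1) / (z + \<gamma>))) = ((1 + \<beta>*\<gamma>)*(\<beta> * z + 1) * (z + \<gamma>) - \<gamma> * (\<beta> * z + 1)^2 - \<beta> * (z+\<gamma>)^2) / ((\<beta> * z + 1) * (z + \<gamma>))"
    using a by (simp add: field_simps power2_eq_square)
  have p: "(1 + \<beta>*\<gamma>)*(\<beta> * z + 1) * (z + \<gamma>) - \<gamma> * (\<beta> * z + 1)^2 - \<beta> * (z+\<gamma>)^2 = (1 - \<beta> * \<gamma>) * ((1 - \<beta> * \<gamma>) * z)"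
    by (simp add: algebra_simps power2_eq_square)
  show ?thesis unfolding e p using a by simp
qed

lemma l58: fixes \<beta> \<gamma> z :: real assumes "\<beta> \<ge> 0" "\<gamma> > 0" "\<beta>*\<gamma> < 1" "z \<ge> 0"
  shows "(\<beta> * z + 1) / (z + \<gamma>) \<le> 1 / \<gamma>"
proof -
  have "\<beta>*\<gamma>*z \<le> 1 * z" using assms by (intro mult_right_mono) auto
  hence "\<gamma> * (\<beta> * z + 1) \<le> z + \<gamma>" by (simp add: algebra_simps)
  moreover have "z + \<gamma> > 0" using assms by simp
  ultimately show ?thesis using assms(2) by (simp add: divide_le_eq le_divide_eq mult.commute)
qed
lemma l64: fixes \<beta> \<gamma> z :: real assumes "\<beta> \<ge> 0" "\<gamma> > 0" "\<beta>*\<gamma> < 1" "z \<ge> 0"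
  shows "\<beta> < (\<beta> * z + 1) / (z + \<gamma>)"
proof -
  have "\<beta> * (z + \<gamma>) < \<beta> * z + 1" using assms by (simp add: algebra_simps)
  moreover have "z + \<gamma> > 0" using assms by simp
  ultimately show ?thesis by (simp add: less_divide_eq)
qed
lemma l81: fixes s a :: real and d :: nat assumes "real d > 0" "s \<le> real d * a" shows "s / real d \<le> a"
  using assms by (simp add: divide_le_eq mult.commute)
lemma l97: fixes s a :: real and d :: nat assumes "real d > 0" "real d * a < s" shows "a < s / real d"
  using assms by (simp add: less_divide_eq mult.commute)
lemma l101: fixes \<beta> \<gamma> y :: real assumes "y \<le> 1/\<gamma>" "\<gamma> > 0" "y > \<beta>" shows "0 \<le> (1 - \<gamma> * y) / (y - \<beta>)"
proof -
  have "\<gamma> * y \<le> 1" using assms by (simp add: le_divide_eq mult.commute)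
  thus ?thesis using assms by (intro divide_nonneg_pos) auto
qed
lemma l106: fixes \<beta> \<gamma> y :: real assumes "y - \<beta> \<noteq> 0" "1 - \<beta>*\<gamma> \<noteq> 0"
  shows "(\<beta> * ((1 - \<gamma> * y) / (y - \<beta>)) + 1) / ((1 - \<gamma> * y) / (y - \<beta>) + \<gamma>) = y"
proof -
  have a: "\<beta> * ((1 - \<gamma> * y) / (y - \<beta>)) + 1 = y * (1 - \<beta>*\<gamma>) / (y - \<beta>)"
    using assms(1) by (simp add: field_simps)
  have b: "(1 - \<gamma> * y) / (y - \<beta>) + \<gamma> = (1 - \<beta>*\<gamma>) / (y - \<beta>)"
    using assms(1) by (simp add: field_simps)
  show ?thesis unfolding a b using assms by simp
qed

theorem lemma3p16:
  fixes \<beta> \<gamma> lam :: real and d :: nat and x :: "nat \<Rightarrow> real"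
  assumes "\<beta> \<ge> 0" "\<gamma> > 0" "lam > 0" "\<beta> * \<gamma> < 1" "d \<ge> 1"
    and "\<forall>i\<in>{1..d}. x i \<ge> 0"
  shows "\<exists>xb::real. xb \<ge> 0 \<and>
     (\<Sum>i=1..d. h_fun \<beta> \<gamma> (x i)) \<le> real d * h_fun \<beta> \<gamma> xb \<and>
     F_fun \<beta> \<gamma> lam d x = F_fun \<beta> \<gamma> lam d (\<lambda>_. xb)"
proof -
  define g where "g = (\<lambda>z::real. (\<beta> * z + 1) / (z + \<gamma>))"
  have hg: "h_fun \<beta> \<gamma> z = (1 + \<beta>*\<gamma> - \<gamma> * g z - \<beta> / g z) / (1 - \<beta>*\<gamma>)" if "z \<ge> 0" for z
  proof -
    have "\<beta> * z + 1 > 0" "z + \<gamma> > 0" "1 - \<beta>*\<gamma> > 0" using assms that mult_nonneg_nonneg[OF assms(1) that] by linarith+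
    thus ?thesis unfolding h_fun_def g_def by (intro hg_lemma) auto
  qed
  have bz: "\<beta> * z \<ge> 0" if "z \<ge> 0" for z using assms(1) that by simp
  have gpos: "g z > 0" if "z \<ge> 0" for z
    using assms that bz[OF that] unfolding g_def by (intro divide_pos_pos) (auto simp: add_nonneg_pos)
  have gup: "g z \<le> 1 / \<gamma>" if "z \<ge> 0" for z
    unfolding g_def using l58 assms that by auto
  have glow: "g z > \<beta>" if "z \<ge> 0" for z
    unfolding g_def using l64 assms that by auto
  define t where "t = (\<lambda>i. ln (g (x i)))"
  define m where "m = (\<Sum>i=1..d. t i) / real d"
  define yb where "yb = exp m"
  define xb where "xb = (1 - \<gamma> * yb) / (yb - \<beta>)"
  have dpos: "real d > 0" using assms by simp
  have cardd: "card {1..d} = d" by simp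
  have ne: "{1..d} \<noteq> {}" using assms by auto
  have expt: "exp (t i) = g (x i)" if "i \<in> {1..d}" for i
    using gpos assms(6) that unfolding t_def by simp
  have "(\<Sum>i=1..d. t i) \<le> (\<Sum>i=1..d. ln (1/\<gamma>))"
  proof (rule sum_mono)
    fix i assume i: "i \<in> {1..d}"
    show "t i \<le> ln (1/\<gamma>)" unfolding t_def
      using gpos[of "x i"] gup[of "x i"] assms(6) i assms(2) by (subst ln_le_cancel_iff) auto
  qed
  hence "m \<le> ln (1/\<gamma>)" unfolding m_def using dpos by (intro l81) auto
  hence yb_up: "yb \<le> 1/\<gamma>" unfolding yb_def using assms(2)
    by (metis exp_ln exp_le_cancel_iff zero_less_divide_1_iff)
  have yb_pos: "yb > 0" unfolding yb_def by simp
  have yb_low: "yb > \<beta>"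
  proof (cases "\<beta> = 0")
    case True thus ?thesis using yb_pos by simp
  next
    case False
    hence bp: "\<beta> > 0" using assms by simp
    have "(\<Sum>i=1..d. ln \<beta>) < (\<Sum>i=1..d. t i)"
    proof (rule sum_strict_mono)
      fix i assume i: "i \<in> {1..d}"
      show "ln \<beta> < t i" unfolding t_def
        using glow[of "x i"] assms(6) i bp by (subst ln_less_cancel_iff) auto
    qed (use ne in auto)
    hence "ln \<beta> < m" unfolding m_def using dpos by (intro l97) auto
    thus ?thesis unfolding yb_def using bp by (metis exp_less_cancel_iff exp_ln)
  qed
  have xb0: "xb \<ge> 0" unfolding xb_def using yb_up yb_low assms(2) by (intro l101) auto
  have gxb: "g xb = yb"
  proof -
    have d0: "yb - \<beta> \<noteq> 0" using yb_low by simp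
    have "1 - \<beta>*\<gamma> \<noteq> 0" using assms by simp
    thus ?thesis unfolding g_def xb_def using d0 by (intro l106) auto
  qed
  have F: "F_fun \<beta> \<gamma> lam d x = F_fun \<beta> \<gamma> lam d (\<lambda>_. xb)"
  proof -
    have "(\<Prod>i=1..d. g (x i)) = (\<Prod>i=1..d. exp (t i))" using expt by simp
    also have "\<dots> = exp (\<Sum>i=1..d. t i)" by (simp add: exp_sum)
    also have "(\<Sum>i=1..d. t i) = real d * m" unfolding m_def using dpos by simp
    also have "exp (real d * m) = yb ^ d" unfolding yb_def by (simp add: exp_of_nat_mult)
    finally have "(\<Prod>i=1..d. g (x i)) = (\<Prod>i=1..d. g xb)" using gxb by simp
    thus ?thesis unfolding F_fun_def g_def by simp
  qed
  have S1: "real d * yb \<le> (\<Sum>i=1..d. g (x i))"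
    using amgm_exp[of "{1..d}" t] ne expt unfolding yb_def m_def by simp
  have S2: "real d * (1/yb) \<le> (\<Sum>i=1..d. 1 / g (x i))"
  proof -
    have "real d * exp ((\<Sum>i=1..d. - t i) / real d) \<le> (\<Sum>i=1..d. exp (- t i))"
      using amgm_exp[of "{1..d}" "\<lambda>i. - t i"] ne by simp
    moreover have "(\<Sum>i=1..d. exp (- t i)) = (\<Sum>i=1..d. 1 / g (x i))"
      using expt by (intro sum.cong) (simp_all add: exp_minus inverse_eq_divide)
    moreover have "exp ((\<Sum>i=1..d. - t i) / real d) = 1 / yb"
      unfolding yb_def m_def by (simp add: sum_negf exp_minus inverse_eq_divide)
    ultimately show ?thesis by simp
  qed
  have "(\<Sum>i=1..d. h_fun \<beta> \<gamma> (x i)) = (\<Sum>i=1..d. (1 + \<beta>*\<gamma> - \<gamma> * g (x i) - \<beta> / g (x i)) / (1 - \<beta>*\<gamma>))"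
    using hg assms(6) by simp
  also have "\<dots> = (real d * (1 + \<beta>*\<gamma>) - \<gamma> * (\<Sum>i=1..d. g (x i)) - \<beta> * (\<Sum>i=1..d. 1 / g (x i))) / (1 - \<beta>*\<gamma>)"
    by (simp add: sum_divide_distrib[symmetric] sum_subtractf sum_distrib_left)
  also have "\<dots> \<le> (real d * (1 + \<beta>*\<gamma>) - \<gamma> * (real d * yb) - \<beta> * (real d * (1/yb))) / (1 - \<beta>*\<gamma>)"
  proof (rule divide_right_mono)
    have "\<beta> * (real d * (1/yb)) \<le> \<beta> * (\<Sum>i=1..d. 1 / g (x i))" by (rule mult_left_mono[OF S2 assms(1)])
    moreover have "\<gamma> * (real d * yb) \<le> \<gamma> * (\<Sum>i=1..d. g (x i))" using assms(2) by (intro mult_left_mono[OF S1]) simp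
    ultimately show "real d * (1 + \<beta>*\<gamma>) - \<gamma> * (\<Sum>i=1..d. g (x i)) - \<beta> * (\<Sum>i=1..d. 1 / g (x i)) \<le> real d * (1 + \<beta>*\<gamma>) - \<gamma> * (real d * yb) - \<beta> * (real d * (1/yb))" by linarith
    show "0 \<le> 1 - \<beta>*\<gamma>" using assms by simp
  qed
  also have "\<dots> = real d * h_fun \<beta> \<gamma> xb"
    using hg[OF xb0] gxb by (simp add: algebra_simps)
  finally show ?thesis using xb0 F by blast
qed

end
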